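(* Let $N=\{1,\ldots,n\}$ and $\mathcal{X}=\{-1,1\}^n$. If $n$ is odd, a deterministic voting rule $\phi:\mathcal{X}\to\{-1,1\}$ is robust and anonymous if and only if it is a simple majority rule. If $n$ is even, no deterministic voting rule is both robust and anonymous.
   Context: A deterministic voting rule $\phi$ is anonymous if $\phi(x)=\phi((x_{\pi(i)})_{i\in N})$ for all $x$ and all permutations $\pi$ of $N$. Responsiveness: $r_i(\phi,p)=p(\{x:\phi(x)=x_i\})$ for $p\in\Delta(\mathcal{X})$ (probability distributions on $\mathcal{X}$). $\phi$ is robust if for every $p\in\Delta(\mathcal{X})$ there is some $i\in N$ with $r_i(\phi,p)>1/2$. A simple majority rule is a rule with $\phi(x)=1$ whenever $\sum_i x_i>0$ and $\phi(x)=-1$ whenever $\sum_ix_i<0$ (for odd $n$ this determines $\phi$ uniquely). *)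

theory Defs
  imports "HOL-Probability.Probability"
begin

definition profiles :: "nat \<Rightarrow> (nat \<Rightarrow> int) set" where
  "profiles n = {1..n} \<rightarrow>\<^sub>E {-1, 1}"

definition voting_rule :: "nat \<Rightarrow> ((nat \<Rightarrow> int) \<Rightarrow> int) \<Rightarrow> bool" where
  "voting_rule n \<phi> \<longleftrightarrow> (\<forall>x\<in>profiles n. \<phi> x \<in> {-1, 1})"

definition anonymous :: "nat \<Rightarrow> ((nat \<Rightarrow> int) \<Rightarrow> int) \<Rightarrow> bool" where
  "anonymous n \<phi> \<longleftrightarrow>
     (\<forall>x\<in>profiles n. \<forall>\<pi>. \<pi> permutes {1..n} \<longrightarrow> \<phi> x = \<phi> (\<lambda>i. x (\<pi> i)))"

definition responsiveness ::
    "nat \<Rightarrow> ((nat \<Rightarrow> int) \<Rightarrow> int) \<Rightarrow> (nat \<Rightarrow> int) pmf \<Rightarrow> nat \<Rightarrow> real" where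
  "responsiveness n \<phi> p i = measure_pmf.prob p {x \<in> profiles n. \<phi> x = x i}"

definition robust :: "nat \<Rightarrow> ((nat \<Rightarrow> int) \<Rightarrow> int) \<Rightarrow> bool" where
  "robust n \<phi> \<longleftrightarrow>
     (\<forall>p :: (nat \<Rightarrow> int) pmf. set_pmf p \<subseteq> profiles n \<longrightarrow>
        (\<exists>i\<in>{1..n}. responsiveness n \<phi> p i > 1/2))"

definition simple_majority :: "nat \<Rightarrow> ((nat \<Rightarrow> int) \<Rightarrow> int) \<Rightarrow> bool" where
  "simple_majority n \<phi> \<longleftrightarrow>
     (\<forall>x\<in>profiles n. ((\<Sum>i\<in>{1..n}. x i) > 0 \<longrightarrow> \<phi> x = 1) \<and>
                     ((\<Sum>i\<in>{1..n}. x i) < 0 \<longrightarrow> \<phi> x = -1))"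

end

theory Submission
  imports Defs
begin

lemma finite_profiles: "finite (profiles n)"
  unfolding profiles_def by (intro finite_PiE) auto

lemma prof_val: "x \<in> profiles n \<Longrightarrow> i \<in> {1..n} \<Longrightarrow> x i = 1 \<or> x i = -1"
  unfolding profiles_def by (auto simp: PiE_def Pi_def)

lemma prof_out: "x \<in> profiles n \<Longrightarrow> i \<notin> {1..n} \<Longrightarrow> x i = undefined"
  unfolding profiles_def by (auto simp: PiE_def extensional_def)

lemma perm_lemma:
  assumes x: "x \<in> profiles n" and y: "y \<in> profiles n" and v: "v \<in> {-1,1::int}"
    and c: "card {i\<in>{1..n}. x i = v} = card {i\<in>{1..n}. y i = v}"
  shows "\<exists>\<pi>. \<pi> permutes {1..n} \<and> y = (\<lambda>i. x (\<pi> i))"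
proof -
  define A where "A = {i\<in>{1..n}. y i = v}"
  define A' where "A' = {i\<in>{1..n}. x i = v}"
  define B where "B = {1..n} - A"
  define B' where "B' = {1..n} - A'"
  obtain f where f: "bij_betw f A A'"
    using finite_same_card_bij[of A A'] c unfolding A_def A'_def by auto
  have "card B = card B'" unfolding B_def B'_def
    by (subst card_Diff_subset, (auto simp: A_def A'_def)[2])+
       (use c in \<open>simp add: A_def A'_def\<close>)
  then obtain g where g: "bij_betw g B B'"
    using finite_same_card_bij[of B B'] unfolding B_def B'_def by auto
  define \<pi> where "\<pi> i = (if i \<in> A then f i else if i \<in> B then g i else i)" for i
  have "bij_betw \<pi> A A'" using f by (rule bij_betw_cong[THEN iffD1, rotated]) (simp add: \<pi>_def)
  moreover have "bij_betw \<pi> B B'" using g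
    by (rule bij_betw_cong[THEN iffD1, rotated]) (simp add: \<pi>_def B_def)
  ultimately have "bij_betw \<pi> (A \<union> B) (A' \<union> B')"
    by (rule bij_betw_combine) (auto simp: B'_def)
  moreover have "A \<union> B = {1..n}" "A' \<union> B' = {1..n}" by (auto simp: A_def B_def A'_def B'_def)
  ultimately have bij: "bij_betw \<pi> {1..n} {1..n}" by simp
  have perm: "\<pi> permutes {1..n}"
    by (rule bij_imp_permutes[OF bij]) (auto simp: \<pi>_def A_def B_def)
  have "y i = x (\<pi> i)" for i
  proof (cases "i \<in> {1..n}")
    case False
    then have "\<pi> i = i" using False by (auto simp: \<pi>_def A_def B_def)
    then show ?thesis using prof_out[OF x False] prof_out[OF y False] by simp
  next
    case True
    show ?thesis
    proof (cases "i \<in> A")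
      case True
      then have "\<pi> i \<in> A'" using f by (auto simp: \<pi>_def bij_betw_def)
      then show ?thesis using True by (auto simp: A_def A'_def)
    next
      case False
      then have iB: "i \<in> B" using \<open>i \<in> {1..n}\<close> by (auto simp: B_def)
      then have "\<pi> i \<in> B'" using g False by (auto simp: \<pi>_def bij_betw_def)
      then have "\<pi> i \<in> {1..n}" "x (\<pi> i) \<noteq> v" by (auto simp: B'_def A'_def)
      moreover have "y i \<noteq> v" "i \<in> {1..n}" using iB by (auto simp: B_def A_def)
      ultimately show ?thesis using prof_val[OF x, of "\<pi> i"] prof_val[OF y, of i] v by auto
    qed
  qed
  then show ?thesis using perm by blast
qed


lemma not_robust:
  assumes v: "v \<in> {-1,1::int}" and m: "2*m \<le> n"
    and h: "\<And>w. w \<in> profiles n \<Longrightarrow> card {i\<in>{1..n}. w i = v} = m \<Longrightarrow> \<phi> w = v"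
  shows "\<not> robust n \<phi>"
proof
  assume rob: "robust n \<phi>"
  define y where "y i = (if i \<in> {1..n} then (if i \<le> m then v else -v) else undefined)" for i
  define z where "z i = (if i \<in> {1..n} then (if m < i \<and> i \<le> 2*m then v else -v) else undefined)" for i
  have vv: "-v \<noteq> v" "-v \<in> {-1,1}" using v by auto
  have yp: "y \<in> profiles n" using v vv by (auto simp: profiles_def y_def PiE_def extensional_def)
  have zp: "z \<in> profiles n" using v vv by (auto simp: profiles_def z_def PiE_def extensional_def)
  have "{i\<in>{1..n}. y i = v} = {1..m}" using m vv by (auto simp: y_def)
  then have py: "\<phi> y = v" using h[OF yp] by simp
  have "{i\<in>{1..n}. z i = v} = {m<..2*m}" using m vv by (auto simp: z_def)
  then have pz: "\<phi> z = v" using h[OF zp] by simp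
  define S where "S = {y, z}"
  define p where "p = pmf_of_set S"
  have S: "S \<noteq> {}" "finite S" by (auto simp: S_def)
  have "set_pmf p \<subseteq> profiles n" using S yp zp by (auto simp: p_def S_def)
  then obtain i where i: "i \<in> {1..n}" and r: "responsiveness n \<phi> p i > 1/2"
    using rob unfolding robust_def by blast
  have eq: "S \<inter> {x \<in> profiles n. \<phi> x = x i} = {w\<in>S. w i = v}"
    using yp zp py pz by (auto simp: S_def)
  have r2: "responsiveness n \<phi> p i = card {w\<in>S. w i = v} / card S"
    unfolding responsiveness_def p_def using measure_pmf_of_set[OF S] eq by simp
  show False
  proof (cases "y = z")
    case True
    have "m = 0"
    proof (rule ccontr)
      assume "m \<noteq> 0"
      then have "y 1 = v" "z 1 = -v" using m by (auto simp: y_def z_def)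
      then show False using True vv by simp
    qed
    then have "y i = -v" "z i = -v" using i by (simp_all add: y_def z_def)
    then have "{w\<in>S. w i = v} = {}" using vv by (auto simp: S_def)
    then have "card {w\<in>S. w i = v} = 0" by (simp only: card.empty)
    then show False using r r2 by (simp del: Collect_empty_eq)
  next
    case False
    then have c2: "card S = 2" by (simp add: S_def)
    have "\<not> (y i = v \<and> z i = v)" using i vv by (auto simp: y_def z_def split: if_splits)
    then have "{w\<in>S. w i = v} \<subseteq> {y} \<or> {w\<in>S. w i = v} \<subseteq> {z}"
      by (auto simp: S_def)
    then have "card {w\<in>S. w i = v} \<le> 1"
    proof
      assume "{w\<in>S. w i = v} \<subseteq> {y}"
      from card_mono[OF _ this] show ?thesis by simp
    next
      assume "{w\<in>S. w i = v} \<subseteq> {z}"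
      from card_mono[OF _ this] show ?thesis by simp
    qed
    then have "real (card {w\<in>S. w i = v}) / card S \<le> 1/2" using c2 by simp
    then show False using r r2 by simp
  qed
qed

lemma sum_count:
  assumes x: "x \<in> profiles n"
  shows "(\<Sum>i\<in>{1..n}. x i) = int (card {i\<in>{1..n}. x i = 1}) - int (card {i\<in>{1..n}. x i = -1})"
    and "card {i\<in>{1..n}. x i = 1} + card {i\<in>{1..n}. x i = -1} = n"
proof -
  let ?P = "{i\<in>{1..n}. x i = 1}" and ?Q = "{i\<in>{1..n}. x i = -1}"
  have U: "{1..n} = ?P \<union> ?Q" using prof_val[OF x] by blast
  have D: "?P \<inter> ?Q = {}" by auto
  have "(\<Sum>i\<in>{1..n}. x i) = (\<Sum>i\<in>?P. x i) + (\<Sum>i\<in>?Q. x i)"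
    by (subst U, rule sum.union_disjoint) auto
  also have "\<dots> = int (card ?P) - int (card ?Q)" by simp
  finally show "(\<Sum>i\<in>{1..n}. x i) = int (card ?P) - int (card ?Q)" .
  have "card ({1..n}::nat set) = card ?P + card ?Q"
    by (subst U, rule card_Un_disjoint) auto
  then show "card ?P + card ?Q = n" by simp
qed


lemma key:
  assumes rob: "robust n \<phi>" and an: "anonymous n \<phi>"
    and x: "x \<in> profiles n" and v: "v \<in> {-1,1::int}" and px: "\<phi> x = v"
  shows "n < 2 * card {i\<in>{1..n}. x i = v}"
proof (rule ccontr)
  assume "\<not> ?thesis"
  then have m: "2 * card {i\<in>{1..n}. x i = v} \<le> n" by simp
  have "\<not> robust n \<phi>"
  proof (rule not_robust[OF v m])
    fix w assume w: "w \<in> profiles n" and c: "card {i\<in>{1..n}. w i = v} = card {i\<in>{1..n}. x i = v}"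
    obtain \<pi> where "\<pi> permutes {1..n}" "w = (\<lambda>i. x (\<pi> i))"
      using perm_lemma[OF x w v] c by metis
    then show "\<phi> w = v" using an x px unfolding anonymous_def by metis
  qed
  then show False using rob by simp
qed

lemma perm_profile:
  assumes x: "x \<in> profiles n" and p: "\<pi> permutes {1..n}"
  shows "(\<lambda>i. x (\<pi> i)) \<in> profiles n"
proof -
  have "\<pi> i \<in> {1..n}" if "i \<in> {1..n}" for i using permutes_in_image[OF p] that by blast
  moreover have "\<pi> i = i" if "i \<notin> {1..n}" for i using p that by (simp add: permutes_not_in)
  ultimately show ?thesis using x unfolding profiles_def by (auto simp: PiE_def Pi_def extensional_def)
qed

lemma sm_anon:
  assumes o: "odd n" and sm: "simple_majority n \<phi>"
  shows "anonymous n \<phi>"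
  unfolding anonymous_def
proof (intro ballI allI impI)
  fix x and \<pi> :: "nat \<Rightarrow> nat" assume x: "x \<in> profiles n" and p: "\<pi> permutes {1..n}"
  have x': "(\<lambda>i. x (\<pi> i)) \<in> profiles n" by (rule perm_profile[OF x p])
  have se: "(\<Sum>i\<in>{1..n}. x (\<pi> i)) = (\<Sum>i\<in>{1..n}. x i)"
    using sum.permute[OF p, of x] by (simp add: comp_def)
  have "(\<Sum>i\<in>{1..n}. x i) \<noteq> 0"
  proof
    assume "(\<Sum>i\<in>{1..n}. x i) = 0"
    then have "int (card {i\<in>{1..n}. x i = 1}) = int (card {i\<in>{1..n}. x i = -1})"
      using sum_count(1)[OF x] by simp
    then have "n = 2 * card {i\<in>{1..n}. x i = 1}" using sum_count(2)[OF x] by simp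
    then show False using o by (metis dvd_triv_left)
  qed
  then show "\<phi> x = \<phi> (\<lambda>i. x (\<pi> i))"
    using sm x x' se unfolding simple_majority_def
    by (metis linorder_neqE_linordered_idom)
qed

lemma sm_robust:
  assumes o: "odd n" and sm: "simple_majority n \<phi>"
  shows "robust n \<phi>"
  unfolding robust_def
proof (intro allI impI)
  fix p :: "(nat \<Rightarrow> int) pmf" assume sp: "set_pmf p \<subseteq> profiles n"
  let ?P = "profiles n"
  define c where "c x = card {i\<in>{1..n}. \<phi> x = x i}" for x
  have cx: "real n + 1 \<le> 2 * real (c x)" if x: "x \<in> ?P" for x
  proof -
    have "(\<Sum>i\<in>{1..n}. x i) \<noteq> 0"
    proof
      assume "(\<Sum>i\<in>{1..n}. x i) = 0"
      then have "int (card {i\<in>{1..n}. x i = 1}) = int (card {i\<in>{1..n}. x i = -1})"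
        using sum_count(1)[OF x] by simp
      then have "n = 2 * card {i\<in>{1..n}. x i = 1}" using sum_count(2)[OF x] by simp
      then show False using o by (metis dvd_triv_left)
    qed
    then consider "(\<Sum>i\<in>{1..n}. x i) > 0" | "(\<Sum>i\<in>{1..n}. x i) < 0" by linarith
    then show ?thesis
    proof cases
      case 1
      then have "\<phi> x = 1" using sm x unfolding simple_majority_def by blast
      then have "c x = card {i\<in>{1..n}. x i = 1}" unfolding c_def by (metis (full_types))
      then show ?thesis using 1 sum_count[OF x] by linarith
    next
      case 2
      then have "\<phi> x = -1" using sm x unfolding simple_majority_def by blast
      then have "c x = card {i\<in>{1..n}. x i = -1}" unfolding c_def by (metis (full_types))
      then show ?thesis using 2 sum_count[OF x] by linarith
    qed
  qed
  have r: "responsiveness n \<phi> p i = (\<Sum>x\<in>?P. pmf p x * (if \<phi> x = x i then 1 else 0))" for i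
  proof -
    have "responsiveness n \<phi> p i = (\<Sum>x\<in>{x\<in>?P. \<phi> x = x i}. pmf p x)"
      unfolding responsiveness_def
      by (rule measure_measure_pmf_finite) (use finite_profiles in auto)
    also have "\<dots> = (\<Sum>x\<in>?P. pmf p x * (if \<phi> x = x i then 1 else 0))"
      by (simp add: sum.inter_filter[OF finite_profiles, symmetric] if_distrib cong: if_cong)
    finally show ?thesis .
  qed
  have "(\<Sum>i\<in>{1..n}. responsiveness n \<phi> p i)
      = (\<Sum>x\<in>?P. pmf p x * (\<Sum>i\<in>{1..n}. (if \<phi> x = x i then 1 else 0)))"
    unfolding r by (subst sum.swap) (simp add: sum_distrib_left)
  also have "\<dots> = (\<Sum>x\<in>?P. pmf p x * real (c x))"
    by (simp add: c_def sum.If_cases Int_def)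
  also have "\<dots> \<ge> (\<Sum>x\<in>?P. pmf p x * ((real n + 1) / 2))"
    by (rule sum_mono, rule mult_left_mono) (auto dest!: cx)
  also have "(\<Sum>x\<in>?P. pmf p x * ((real n + 1) / 2)) = (real n + 1) / 2"
    using sum_pmf_eq_1[OF finite_profiles sp] by (simp only: sum_distrib_right[symmetric])
  finally have tot: "(real n + 1) / 2 \<le> (\<Sum>i\<in>{1..n}. responsiveness n \<phi> p i)" .
  show "\<exists>i\<in>{1..n}. responsiveness n \<phi> p i > 1/2"
  proof (rule ccontr)
    assume "\<not> ?thesis"
    then have "(\<Sum>i\<in>{1..n}. responsiveness n \<phi> p i) \<le> (\<Sum>i\<in>{1..n}. 1/2)"
      by (intro sum_mono) (auto simp: not_less)
    then show False using tot by simp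
  qed
qed


theorem corollary2:
  fixes n :: nat and \<phi> :: "(nat \<Rightarrow> int) \<Rightarrow> int"
  assumes "voting_rule n \<phi>"
  shows "(odd n \<longrightarrow> (robust n \<phi> \<and> anonymous n \<phi> \<longleftrightarrow> simple_majority n \<phi>)) \<and>
         (even n \<longrightarrow> \<not> (robust n \<phi> \<and> anonymous n \<phi>))"
proof (intro conjI impI)
  assume o: "odd n"
  show "robust n \<phi> \<and> anonymous n \<phi> \<longleftrightarrow> simple_majority n \<phi>"
  proof
    assume ra: "robust n \<phi> \<and> anonymous n \<phi>"
    show "simple_majority n \<phi>"
      unfolding simple_majority_def
    proof (intro ballI conjI impI)
      fix x assume x: "x \<in> profiles n"
      have vr: "\<phi> x = 1 \<or> \<phi> x = -1" using assms x unfolding voting_rule_def by auto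
      note sc = sum_count[OF x]
      {
        assume "(\<Sum>i\<in>{1..n}. x i) > 0"
        show "\<phi> x = 1"
        proof (rule ccontr)
          assume "\<phi> x \<noteq> 1"
          then have "\<phi> x = -1" using vr by simp
          from key[OF ra[THEN conjunct1] ra[THEN conjunct2] x _ this]
          have "n < 2 * card {i\<in>{1..n}. x i = -1}" by simp
          then show False using sc \<open>(\<Sum>i\<in>{1..n}. x i) > 0\<close> by linarith
        qed
      }
      {
        assume "(\<Sum>i\<in>{1..n}. x i) < 0"
        show "\<phi> x = -1"
        proof (rule ccontr)
          assume "\<phi> x \<noteq> -1"
          then have "\<phi> x = 1" using vr by simp
          from key[OF ra[THEN conjunct1] ra[THEN conjunct2] x _ this]
          have "n < 2 * card {i\<in>{1..n}. x i = 1}" by simp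
          then show False using sc \<open>(\<Sum>i\<in>{1..n}. x i) < 0\<close> by linarith
        qed
      }
    qed
  next
    assume "simple_majority n \<phi>"
    then show "robust n \<phi> \<and> anonymous n \<phi>" using sm_robust sm_anon o by blast
  qed
next
  assume e: "even n"
  show "\<not> (robust n \<phi> \<and> anonymous n \<phi>)"
  proof
    assume ra: "robust n \<phi> \<and> anonymous n \<phi>"
    define x where "x i = (if i \<in> {1..n} then (if i \<le> n div 2 then 1 else -1::int) else undefined)" for i :: nat
    have x: "x \<in> profiles n" by (auto simp: profiles_def x_def PiE_def extensional_def)
    have c1: "{i\<in>{1..n}. x i = 1} = {1..n div 2}" by (auto simp: x_def)
    have c2: "{i\<in>{1..n}. x i = -1} = {n div 2<..n}" by (auto simp: x_def)
    have vr: "\<phi> x = 1 \<or> \<phi> x = -1" using assms x unfolding voting_rule_def by auto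
    then show False
    proof
      assume "\<phi> x = 1"
      from key[OF ra[THEN conjunct1] ra[THEN conjunct2] x _ this]
      show False using c1 by simp
    next
      assume "\<phi> x = -1"
      from key[OF ra[THEN conjunct1] ra[THEN conjunct2] x _ this]
      show False using c2 e by (simp, presburger)
    qed
  qed
qed

end
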